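(* Let $t\in\mathbb{N}$ and let $F(x)=\mathrm{sign}(w\cdot x-\theta)$ be an LTF over $\{-1,1\}^n$ with every $w_i$ an integer in $\{-t,\dots,t\}$. Then for every $s\in\mathbb{N}$, either $w$ has at most $s$ nonzero coordinates, or the normalized vector $u=w/\|w\|_2$ satisfies $\sum_{i=1}^n u_i^4\le t^2/(s+1)$; i.e. $F$ is either $s$-sparse or $(t/\sqrt{s+1})$-regular.
   Context: $\mathrm{sign}(z)=1$ if $z>0$ and $-1$ otherwise. An LTF is $s$-sparse if its weight vector has at most $s$ nonzero entries. A unit vector $u$ is $\tau$-regular if $\sum_i u_i^4\le\tau^2$; an LTF is $\tau$-regular if it can be written $\mathrm{sign}(u\cdot x-\theta')$ with $\|u\|_2=1$ and $u$ $\tau$-regular. *)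

theory Defs
  imports Complex_Main
begin

text \<open>Vectors in R^n are represented as functions on the index set {1..n}.\<close>

definition nnz :: "nat \<Rightarrow> (nat \<Rightarrow> real) \<Rightarrow> nat" where
  "nnz n w = card {i \<in> {1..n}. w i \<noteq> 0}"

definition l2norm :: "nat \<Rightarrow> (nat \<Rightarrow> real) \<Rightarrow> real" where
  "l2norm n w = sqrt (\<Sum>i=1..n. (w i)^2)"

definition sum4 :: "nat \<Rightarrow> (nat \<Rightarrow> real) \<Rightarrow> real" where
  "sum4 n u = (\<Sum>i=1..n. (u i)^4)"

end

theory Submission
  imports Defs
begin

theorem mainTheorem3:
  fixes t n s :: nat and w :: "nat \<Rightarrow> int"
  assumes "\<forall>i\<in>{1..n}. \<bar>w i\<bar> \<le> int t"
  shows "nnz n (\<lambda>i. real_of_int (w i)) \<le> s \<or>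
         sum4 n (\<lambda>i. real_of_int (w i) / l2norm n (\<lambda>j. real_of_int (w j)))
           \<le> (real t)^2 / (real s + 1)"
proof (cases "nnz n (\<lambda>i. real_of_int (w i)) \<le> s")
  case True then show ?thesis by simp
next
  case False
  define W where "W = (\<lambda>i. real_of_int (w i))"
  define S where "S = (\<Sum>i=1..n. (W i)^2)"
  define A where "A = {i \<in> {1..n}. W i \<noteq> 0}"
  from False have k: "card A \<ge> s + 1" unfolding nnz_def A_def W_def by simp
  have sq1: "(W i)^2 \<ge> 1" if "i \<in> A" for i
  proof -
    have "w i \<noteq> 0" using that unfolding A_def W_def by simp
    hence "\<bar>w i\<bar> \<ge> 1" by simp
    hence "\<bar>W i\<bar> \<ge> 1" unfolding W_def by (metis of_int_1_le_iff of_int_abs)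
    thus ?thesis by (metis abs_ge_self abs_le_square_iff one_le_power power2_abs)
  qed
  have "real (card A) = (\<Sum>i\<in>A. 1)" by simp
  also have "\<dots> \<le> (\<Sum>i\<in>A. (W i)^2)" by (rule sum_mono) (use sq1 in auto)
  also have "\<dots> \<le> S" unfolding S_def A_def by (rule sum_mono2) auto
  finally have SA: "real (card A) \<le> S" .
  hence Sge: "S \<ge> real s + 1" using k by linarith
  hence Spos: "S > 0" by simp
  have b: "(W i)^4 \<le> (real t)^2 * (W i)^2" if "i \<in> {1..n}" for i
  proof -
    have "\<bar>W i\<bar> \<le> real t" using assms that unfolding W_def
      by (metis of_int_abs of_int_le_iff of_int_of_nat_eq)
    hence "(W i)^2 \<le> (real t)^2" by (metis abs_le_square_iff abs_of_nat of_nat_0_le_iff abs_of_nonneg)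
    hence "(W i)^2 * (W i)^2 \<le> (real t)^2 * (W i)^2" by (rule mult_right_mono) simp
    thus ?thesis by (simp add: power4_eq_xxxx power2_eq_square)
  qed
  have L: "l2norm n W = sqrt S" unfolding l2norm_def S_def by simp
  have "sum4 n (\<lambda>i. W i / l2norm n W) = (\<Sum>i=1..n. (W i)^4) / S^2"
    unfolding sum4_def L
    by (simp add: power_divide sum_divide_distrib[symmetric])
       (metis Spos less_imp_le power2_eq_square power_mult real_sqrt_pow2 numeral_Bit0 mult_2 power_add)
  also have "\<dots> \<le> ((real t)^2 * S) / S^2"
    unfolding S_def sum_distrib_left by (intro divide_right_mono sum_mono b) auto
  also have "\<dots> = (real t)^2 / S" using Spos by (simp add: power2_eq_square)
  also have "\<dots> \<le> (real t)^2 / (real s + 1)"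
    using Sge by (intro divide_left_mono) auto
  finally have "sum4 n (\<lambda>i. real_of_int (w i) / l2norm n (\<lambda>j. real_of_int (w j)))
           \<le> (real t)^2 / (real s + 1)" by (simp add: W_def)
  thus ?thesis by simp
qed

end
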